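(* Let $k_1,k_2$ be nonnegative integers with $2k_1+k_2\ge 2$. Then for every integer $t$ with $1\le t\le k_1$ there exists a projective linear code $C$ over $\mathbb{Z}_4$ of type $4^{k_1}2^{k_2}$, length $n=2^{2k_1+k_2-1}-2^{2k_1+k_2-t-1}$ and minimum Lee distance $d_L=n$, having exactly two nonzero Lee weights $w_1=2^{2k_1+k_2-1}-2^{2k_1+k_2-t-1}$ and $w_2=2^{2k_1+k_2-1}$, with $A_{w_1}=2^{2k_1+k_2}-2^t$ and $A_{w_2}=2^t-1$.
   Context: A linear code of length $n$ over $\mathbb{Z}_4$ is a $\mathbb{Z}_4$-submodule of $\mathbb{Z}_4^n$; it has type $4^{k_1}2^{k_2}$ if it is isomorphic as a group to $\mathbb{Z}_4^{k_1}\times\mathbb{Z}_2^{k_2}$. The Lee weight on $\mathbb{Z}_4$ is $w_L(0)=0,w_L(1)=1,w_L(2)=2,w_L(3)=1$, extended additively to vectors; $d_L$ is the minimum Lee weight of a nonzero codeword. The dual $C^\perp$ is taken with respect to $\mathbf{x}\cdot\mathbf{y}=\sum x_iy_i\in\mathbb{Z}_4$, and $C$ is projective if $d_L(C^\perp)\ge3$. $A_w$ is the number of codewords of Lee weight $w$. *)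

theory Defs
  imports Main
begin

text \<open>Elements of Z_4 are represented by the integers 0,1,2,3 (residues mod 4).
  A word of length n over Z_4 is a function nat => int with values in {0..3}
  on {0..<n} and value 0 outside {0..<n}.\<close>

definition z4_words :: "nat \<Rightarrow> (nat \<Rightarrow> int) set" where
  "z4_words n = {x. (\<forall>i<n. 0 \<le> x i \<and> x i < 4) \<and> (\<forall>i\<ge>n. x i = 0)}"

definition vadd4 :: "(nat \<Rightarrow> int) \<Rightarrow> (nat \<Rightarrow> int) \<Rightarrow> (nat \<Rightarrow> int)" where
  "vadd4 x y = (\<lambda>i. (x i + y i) mod 4)"

definition smult4 :: "int \<Rightarrow> (nat \<Rightarrow> int) \<Rightarrow> (nat \<Rightarrow> int)" where
  "smult4 a x = (\<lambda>i. (a * x i) mod 4)"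

definition z4_linear_code :: "nat \<Rightarrow> (nat \<Rightarrow> int) set \<Rightarrow> bool" where
  "z4_linear_code n C \<longleftrightarrow> C \<subseteq> z4_words n \<and> (\<lambda>_. 0) \<in> C \<and>
     (\<forall>x\<in>C. \<forall>y\<in>C. vadd4 x y \<in> C) \<and>
     (\<forall>a::int. \<forall>x\<in>C. smult4 a x \<in> C)"

definition type_group :: "nat \<Rightarrow> nat \<Rightarrow> ((nat \<Rightarrow> int) \<times> (nat \<Rightarrow> int)) set" where
  "type_group k1 k2 =
     {(u, v). (\<forall>i<k1. 0 \<le> u i \<and> u i < 4) \<and> (\<forall>i\<ge>k1. u i = 0) \<and>
              (\<forall>i<k2. 0 \<le> v i \<and> v i < 2) \<and> (\<forall>i\<ge>k2. v i = 0)}"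

definition type_add :: "((nat \<Rightarrow> int) \<times> (nat \<Rightarrow> int)) \<Rightarrow> ((nat \<Rightarrow> int) \<times> (nat \<Rightarrow> int))
    \<Rightarrow> ((nat \<Rightarrow> int) \<times> (nat \<Rightarrow> int))" where
  "type_add p q = ((\<lambda>i. (fst p i + fst q i) mod 4), (\<lambda>i. (snd p i + snd q i) mod 2))"

definition has_type :: "(nat \<Rightarrow> int) set \<Rightarrow> nat \<Rightarrow> nat \<Rightarrow> bool" where
  "has_type C k1 k2 \<longleftrightarrow> (\<exists>\<phi>. bij_betw \<phi> C (type_group k1 k2) \<and>
      (\<forall>x\<in>C. \<forall>y\<in>C. \<phi> (vadd4 x y) = type_add (\<phi> x) (\<phi> y)))"

definition lee :: "int \<Rightarrow> nat" where
  "lee a = (if a mod 4 = 0 then 0 else if a mod 4 = 2 then 2 else 1)"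

definition lee_weight :: "nat \<Rightarrow> (nat \<Rightarrow> int) \<Rightarrow> nat" where
  "lee_weight n x = (\<Sum>i<n. lee (x i))"

definition min_lee :: "nat \<Rightarrow> (nat \<Rightarrow> int) set \<Rightarrow> nat" where
  "min_lee n C = Min (lee_weight n ` (C - {\<lambda>_. 0}))"

definition dual_code :: "nat \<Rightarrow> (nat \<Rightarrow> int) set \<Rightarrow> (nat \<Rightarrow> int) set" where
  "dual_code n C = {y \<in> z4_words n. \<forall>x\<in>C. (\<Sum>i<n. x i * y i) mod 4 = 0}"

text \<open>Projective: d_L(C^perp) >= 3, i.e. every nonzero dual codeword has Lee
  weight at least 3 (vacuous if the dual is zero).\<close>
definition projective :: "nat \<Rightarrow> (nat \<Rightarrow> int) set \<Rightarrow> bool" where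
  "projective n C \<longleftrightarrow> (\<forall>y \<in> dual_code n C - {\<lambda>_. 0}. lee_weight n y \<ge> 3)"

definition weight_count :: "nat \<Rightarrow> (nat \<Rightarrow> int) set \<Rightarrow> nat \<Rightarrow> nat" where
  "weight_count n C w = card {x \<in> C. lee_weight n x = w}"

end

theory Submission
  imports Defs
begin



lemma lee_cong: "x mod 4 = y mod 4 \<Longrightarrow> lee x = lee y"
  by (simp add: lee_def)

lemma lee_neg: "lee (- x) = lee x"
  unfolding lee_def by presburger

lemma lee_plus2: "lee y + lee (y + 2) = 2"
  unfolding lee_def by presburger

lemma lee_zero_iff: "0 \<le> y \<Longrightarrow> y < 4 \<Longrightarrow> lee y = 0 \<longleftrightarrow> y = 0"
  unfolding lee_def by presburger

lemma lee_le2: "lee y \<le> 2"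
  unfolding lee_def by auto

lemma lee_one_iff: "0 \<le> y \<Longrightarrow> y < 4 \<Longrightarrow> lee y = 1 \<longleftrightarrow> (y = 1 \<or> y = 3)"
  unfolding lee_def by presburger

lemma shift_sum:
  fixes f :: "'a \<Rightarrow> int"
  assumes fin: "finite X" and bij: "bij_betw \<sigma> X X"
    and sh: "\<And>x. x \<in> X \<Longrightarrow> f (\<sigma> x) mod 4 = (f x + 2) mod 4"
  shows "(\<Sum>x\<in>X. lee (f x)) = card X"
proof -
  have "(\<Sum>x\<in>X. lee (f (\<sigma> x))) = (\<Sum>x\<in>X. lee (f x))"
    using sum.reindex_bij_betw[OF bij, of "\<lambda>x. lee (f x)"] by simp
  moreover have "(\<Sum>x\<in>X. lee (f (\<sigma> x))) = (\<Sum>x\<in>X. lee (f x + 2))"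
    by (rule sum.cong) (auto intro: lee_cong sh)
  ultimately have "2 * (\<Sum>x\<in>X. lee (f x)) = (\<Sum>x\<in>X. lee (f x) + lee (f x + 2))"
    by (simp add: sum.distrib)
  also have "\<dots> = 2 * card X" by (simp add: lee_plus2)
  finally show ?thesis by simp
qed

definition Pset :: "nat \<Rightarrow> (nat \<Rightarrow> int set) \<Rightarrow> (nat \<Rightarrow> int) set" where
  "Pset k V = {f. (\<forall>i<k. f i \<in> V i) \<and> (\<forall>i\<ge>k. f i = 0)}"

lemma Pset_0: "Pset 0 V = {\<lambda>_. 0}"
  by (auto simp: Pset_def)

lemma Pset_Suc: "Pset (Suc k) V = (\<lambda>(f,x). f(k:=x)) ` (Pset k V \<times> V k)"
proof
  show "Pset (Suc k) V \<subseteq> (\<lambda>(f,x). f(k:=x)) ` (Pset k V \<times> V k)"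
  proof
    fix f assume f: "f \<in> Pset (Suc k) V"
    have "f = (\<lambda>(f,x). f(k:=x)) (f(k:=0), f k)" by simp
    moreover have "(f(k:=0), f k) \<in> Pset k V \<times> V k"
      using f by (auto simp: Pset_def)
    ultimately show "f \<in> (\<lambda>(f,x). f(k:=x)) ` (Pset k V \<times> V k)" by blast
  qed
  show "(\<lambda>(f,x). f(k:=x)) ` (Pset k V \<times> V k) \<subseteq> Pset (Suc k) V"
    by (auto simp: Pset_def less_Suc_eq)
qed

lemma Pset_inj: "inj_on (\<lambda>(f,x). f(k:=x)) (Pset k V \<times> V k)"
proof (rule inj_onI, clarify)
  fix f x f' x'
  assume "f \<in> Pset k V" "f' \<in> Pset k V" and eq: "f(k:=x) = f'(k:=x')"
  then have "f k = 0" "f' k = 0" by (auto simp: Pset_def)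
  moreover have "x = x'" using fun_cong[OF eq, of k] by simp
  moreover have "\<And>i. i \<noteq> k \<Longrightarrow> f i = f' i" using eq by (metis fun_upd_other)
  ultimately show "f = f' \<and> x = x'" by (metis ext)
qed

lemma Pset_card:
  assumes "\<And>i. i < k \<Longrightarrow> finite (V i)"
  shows "finite (Pset k V) \<and> card (Pset k V) = (\<Prod>i<k. card (V i))"
  using assms
proof (induction k)
  case 0 then show ?case by (simp add: Pset_0)
next
  case (Suc k)
  then have IH: "finite (Pset k V)" "card (Pset k V) = (\<Prod>i<k. card (V i))" by auto
  have fk: "finite (V k)" using Suc.prems by auto
  show ?case unfolding Pset_Suc
    using IH fk card_image[OF Pset_inj, of k V] by (simp add: card_cartesian_product)
qed

lemma prod_if_lt:
  "(\<Prod>i<k. (if i < t then x else y)) = (x::nat) ^ (min k t) * y ^ (k - t)"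
proof (induction k)
  case 0 then show ?case by simp
next
  case (Suc k)
  show ?case
  proof (cases "k < t")
    case True
    then have "min (Suc k) t = Suc (min k t)" "Suc k - t = 0" "k - t = 0" by auto
    then show ?thesis using Suc True by simp
  next
    case False
    then have "min (Suc k) t = min k t" "Suc k - t = Suc (k - t)" by auto
    then show ?thesis using Suc False by simp
  qed
qed




lemma sum_if_eq:
  fixes f :: "nat \<Rightarrow> int"
  assumes "i < k"
  shows "(\<Sum>j<k. (if j = i then x else f j)) = (\<Sum>j<k. f j) + x - f i"
proof -
  have "(\<Sum>j<k. (if j = i then x else f j)) = x + (\<Sum>j\<in>{..<k}-{i}. (if j = i then x else f j))"
    using assms by (subst sum.remove[of _ i]) auto
  also have "(\<Sum>j\<in>{..<k}-{i}. (if j = i then x else f j)) = (\<Sum>j\<in>{..<k}-{i}. f j)"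
    by (rule sum.cong) auto
  also have "(\<Sum>j<k. f j) = f i + (\<Sum>j\<in>{..<k}-{i}. f j)"
    using assms by (subst sum.remove[of _ i]) auto
  ultimately show ?thesis by simp
qed

type_synonym elt = "(nat \<Rightarrow> int) \<times> (nat \<Rightarrow> int)"

locale Z4C =
  fixes k1 k2 t :: nat
  assumes t1: "1 \<le> t" and tk: "t \<le> k1"
begin

definition G :: "elt set" where "G = type_group k1 k2"

definition dot :: "elt \<Rightarrow> elt \<Rightarrow> int" where
  "dot c g = ((\<Sum>i<k1. fst c i * fst g i) + 2 * (\<Sum>i<k2. snd c i * snd g i)) mod 4"

definition upd_a :: "nat \<Rightarrow> int \<Rightarrow> elt \<Rightarrow> elt" where
  "upd_a i d c = ((fst c)(i := (fst c i + d) mod 4), snd c)"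

definition upd_b :: "nat \<Rightarrow> elt \<Rightarrow> elt" where
  "upd_b i c = (fst c, (snd c)(i := 1 - snd c i))"

definition negc :: "elt \<Rightarrow> elt" where
  "negc c = ((\<lambda>i. (- fst c i) mod 4), snd c)"

definition T :: "elt set" where "T = {c \<in> G. \<exists>j<t. odd (fst c j)}"
definition E :: "elt set" where "E = {c \<in> G. \<forall>j<t. even (fst c j)}"
definition lead :: "elt \<Rightarrow> nat" where "lead c = (LEAST j. odd (fst c j))"
definition S :: "elt set" where "S = {c \<in> T. fst c (lead c) = 1}"
definition H :: "elt set" where
  "H = Pset k1 (\<lambda>i. if i < t then {0,2} else {0}) \<times> Pset k2 (\<lambda>_. {0})"

definition zero :: elt where "zero = (\<lambda>_. 0, \<lambda>_. 0)"

lemma G_eq: "G = Pset k1 (\<lambda>_. {0..3}) \<times> Pset k2 (\<lambda>_. {0..1})"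
  by (auto simp: G_def type_group_def Pset_def)

lemma G_fin: "finite G" and G_card: "card G = 2 ^ (2*k1+k2)"
proof -
  have "finite (Pset k1 (\<lambda>_. {0..3}))" "card (Pset k1 (\<lambda>_. {0..3})) = 4 ^ k1"
    using Pset_card[of k1 "\<lambda>_. {0..3}"] by auto
  moreover have "finite (Pset k2 (\<lambda>_. {0..1}))" "card (Pset k2 (\<lambda>_. {0..1})) = 2 ^ k2"
    using Pset_card[of k2 "\<lambda>_. {0..1}"] by auto
  ultimately show "finite G" "card G = 2 ^ (2*k1+k2)"
    by (auto simp: G_eq card_cartesian_product power_add power_mult)
qed

lemma E_eq: "E = Pset k1 (\<lambda>i. if i < t then {0,2} else {0..3}) \<times> Pset k2 (\<lambda>_. {0..1})"
proof -
  have "\<And>x::int. 0 \<le> x \<Longrightarrow> x < 4 \<Longrightarrow> even x \<longleftrightarrow> x = 0 \<or> x = 2" by presburger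
  then show ?thesis using tk
    unfolding E_def G_def type_group_def Pset_def
    by (auto split: if_splits)
qed

lemma E_card: "card E = 2 ^ (2*k1+k2-t)"
proof -
  have "card (Pset k1 (\<lambda>i. if i < t then {0,2} else {0..3})) = (\<Prod>i<k1. (if i < t then 2 else 4))"
    using Pset_card[of k1 "\<lambda>i. if i < t then {0,2} else {0..3}"] by (auto intro: prod.cong)
  also have "\<dots> = 2 ^ t * 4 ^ (k1 - t)" using tk by (simp add: prod_if_lt min_def)
  finally have 1: "card (Pset k1 (\<lambda>i. if i < t then {0,2} else {0..3})) = 2 ^ t * 4 ^ (k1 - t)" .
  have 2: "card (Pset k2 (\<lambda>_. {0..1})) = 2 ^ k2"
    using Pset_card[of k2 "\<lambda>_. {0..1}"] by auto
  obtain r where r: "k1 = t + r" using tk le_Suc_ex by blast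
  have "2 ^ t * 4 ^ (k1 - t) * 2 ^ k2 = (2::nat) ^ (2*k1+k2-t)"
  proof -
    have "(4::nat) ^ r = 2 ^ (2 * r)" by (simp add: power_mult)
    then show ?thesis by (simp add: r power_add mult_2)
  qed
  then show ?thesis using 1 2 by (simp add: E_eq card_cartesian_product)
qed

lemma H_card: "card H = 2 ^ t" and H_fin: "finite H"
proof -
  have "card (Pset k1 (\<lambda>i. if i < t then {0,2} else {0})) = (\<Prod>i<k1. (if i < t then 2 else 1))"
    using Pset_card[of k1 "\<lambda>i. if i < t then {0,2} else {0}"] by (auto intro: prod.cong)
  also have "\<dots> = 2 ^ t" using tk by (simp add: prod_if_lt min_def)
  finally show "card H = 2 ^ t"
    using Pset_card[of k2 "\<lambda>_. {0}"] by (simp add: H_def card_cartesian_product)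
  show "finite H" using Pset_card[of k1 "\<lambda>i. if i < t then {0,2} else {0}"]
      Pset_card[of k2 "\<lambda>_. {0}"] by (simp add: H_def)
qed

lemma H_sub: "H \<subseteq> G"
  using tk by (auto simp: H_def G_def type_group_def Pset_def split: if_splits)

lemma zero_H: "zero \<in> H" by (auto simp: zero_def H_def Pset_def)
lemma zero_G: "zero \<in> G" using zero_H H_sub by auto

lemma G_T_E: "G = T \<union> E" "T \<inter> E = {}"
  by (auto simp: T_def E_def)

lemma T_card: "card T = card G - card E"
proof -
  have "finite T" "finite E" using G_fin G_T_E(1) by (auto intro: finite_subset)
  then have "card G = card T + card E" using G_T_E card_Un_disjoint by metis
  then show ?thesis by simp
qed

lemma dot_modI:
  assumes "4 dvd ((\<Sum>i<k1. fst c i * fst g i) + 2 * (\<Sum>i<k2. snd c i * snd g i)) - Y"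
  shows "dot c g = Y mod 4"
  using assms unfolding dot_def by (simp add: mod_eq_dvd_iff)

lemma dot_range: "0 \<le> dot c g" "dot c g < 4"
  by (auto simp: dot_def)

lemma dot_upd_a:
  assumes "i < k1"
  shows "dot (upd_a i d c) g = (dot c g + d * fst g i) mod 4"
proof -
  let ?A = "\<Sum>j<k1. fst c j * fst g j" and ?B = "\<Sum>j<k2. snd c j * snd g j"
  have "(\<Sum>j<k1. fst (upd_a i d c) j * fst g j)
      = (\<Sum>j<k1. (if j = i then ((fst c i + d) mod 4) * fst g i else fst c j * fst g j))"
    by (rule sum.cong) (auto simp: upd_a_def)
  also have "\<dots> = ?A + ((fst c i + d) mod 4) * fst g i - fst c i * fst g i"
    using sum_if_eq[OF assms] by simp
  finally have 1: "(\<Sum>j<k1. fst (upd_a i d c) j * fst g j) = ?A + ((fst c i + d) mod 4 - fst c i) * fst g i"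
    by (simp add: algebra_simps)
  have 2: "(\<Sum>j<k2. snd (upd_a i d c) j * snd g j) = ?B" by (simp add: upd_a_def)
  have "4 dvd ((fst c i + d) mod 4 - fst c i - d)"
    by (metis mod_eq_dvd_iff mod_mod_trivial diff_diff_eq)
  then have "4 dvd ((fst c i + d) mod 4 - fst c i - d) * fst g i" by simp
  moreover have "(\<Sum>j<k1. fst (upd_a i d c) j * fst g j) + 2 * (\<Sum>j<k2. snd (upd_a i d c) j * snd g j)
     - (?A + 2 * ?B + d * fst g i) = ((fst c i + d) mod 4 - fst c i - d) * fst g i"
    unfolding 1 2 by (simp add: algebra_simps)
  ultimately have "dot (upd_a i d c) g = (?A + 2 * ?B + d * fst g i) mod 4"
    by (intro dot_modI) simp
  also have "\<dots> = (dot c g + d * fst g i) mod 4"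
    by (simp add: dot_def mod_add_left_eq)
  finally show ?thesis .
qed

lemma dot_upd_b:
  assumes "i < k2"
  shows "dot (upd_b i c) g = (dot c g + 2 * snd g i) mod 4"
proof -
  let ?A = "\<Sum>j<k1. fst c j * fst g j" and ?B = "\<Sum>j<k2. snd c j * snd g j"
  have "(\<Sum>j<k2. snd (upd_b i c) j * snd g j)
      = (\<Sum>j<k2. (if j = i then (1 - snd c i) * snd g i else snd c j * snd g j))"
    by (rule sum.cong) (auto simp: upd_b_def)
  also have "\<dots> = ?B + (1 - snd c i) * snd g i - snd c i * snd g i"
    using sum_if_eq[OF assms] by simp
  finally have 1: "(\<Sum>j<k2. snd (upd_b i c) j * snd g j) = ?B + snd g i - 2 * snd c i * snd g i"
    by (simp add: algebra_simps)
  have 2: "(\<Sum>j<k1. fst (upd_b i c) j * fst g j) = ?A" by (simp add: upd_b_def)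
  have "(\<Sum>j<k1. fst (upd_b i c) j * fst g j) + 2 * (\<Sum>j<k2. snd (upd_b i c) j * snd g j)
     - (?A + 2 * ?B + 2 * snd g i) = 4 * (- snd c i * snd g i)"
    unfolding 1 2 by (simp add: algebra_simps)
  then have "dot (upd_b i c) g = (?A + 2 * ?B + 2 * snd g i) mod 4"
    by (intro dot_modI) simp
  also have "\<dots> = (dot c g + 2 * snd g i) mod 4"
    by (simp add: dot_def mod_add_left_eq)
  finally show ?thesis .
qed

lemma upd_a_G: "c \<in> G \<Longrightarrow> i < k1 \<Longrightarrow> upd_a i d c \<in> G"
  by (auto simp: G_def type_group_def upd_a_def)

lemma upd_b_G: "c \<in> G \<Longrightarrow> i < k2 \<Longrightarrow> upd_b i c \<in> G"
  by (auto simp: G_def type_group_def upd_b_def)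

lemma upd_a_inv: "c \<in> G \<Longrightarrow> (d + d') mod 4 = 0 \<Longrightarrow> upd_a i d' (upd_a i d c) = c"
proof -
  assume c: "c \<in> G" and dd: "(d + d') mod 4 = 0"
  have r: "0 \<le> fst c i \<and> fst c i < 4" using c
    by (cases "i < k1") (auto simp: G_def type_group_def)
  have "((fst c i + d) mod 4 + d') mod 4 = (fst c i + (d + d')) mod 4"
    by (simp add: mod_add_left_eq add.assoc)
  also have "\<dots> = fst c i mod 4" using dd by (metis mod_add_right_eq add_0_right)
  also have "\<dots> = fst c i" using r by simp
  finally show ?thesis by (auto simp: upd_a_def)
qed

lemma upd_b_inv: "c \<in> G \<Longrightarrow> upd_b i (upd_b i c) = c"
  by (auto simp: upd_b_def)

lemma upd_a_parity: "even d \<Longrightarrow> odd (fst (upd_a i d c) j) \<longleftrightarrow> odd (fst c j)"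
  by (auto simp: upd_a_def) presburger+

end


context Z4C begin

lemma sum_upd_a:
  assumes X: "X \<subseteq> G" and i: "i < k1" and d: "(d * fst g i) mod 4 = 2"
    and c1: "\<And>c. c \<in> X \<Longrightarrow> upd_a i d c \<in> X" and c2: "\<And>c. c \<in> X \<Longrightarrow> upd_a i (4 - d) c \<in> X"
  shows "(\<Sum>c\<in>X. lee (dot c g)) = card X"
proof (rule shift_sum)
  show "finite X" using X G_fin finite_subset by blast
  show "bij_betw (upd_a i d) X X"
  proof (rule bij_betw_byWitness[where f' = "upd_a i (4 - d)"])
    show "\<forall>a\<in>X. upd_a i (4 - d) (upd_a i d a) = a" using X by (auto intro: upd_a_inv)
    show "\<forall>a\<in>X. upd_a i d (upd_a i (4 - d) a) = a" using X by (auto intro: upd_a_inv)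
  qed (use c1 c2 in auto)
  fix c assume "c \<in> X"
  have "dot (upd_a i d c) g mod 4 = (dot c g + d * fst g i) mod 4" using dot_upd_a[OF i] by simp
  also have "\<dots> = (dot c g + 2) mod 4" using d by (metis mod_add_right_eq)
  finally show "dot (upd_a i d c) g mod 4 = (dot c g + 2) mod 4" .
qed

lemma sum_upd_b:
  assumes X: "X \<subseteq> G" and i: "i < k2" and d: "snd g i = 1"
    and c1: "\<And>c. c \<in> X \<Longrightarrow> upd_b i c \<in> X"
  shows "(\<Sum>c\<in>X. lee (dot c g)) = card X"
proof (rule shift_sum)
  show "finite X" using X G_fin finite_subset by blast
  show "bij_betw (upd_b i) X X"
  proof (rule bij_betw_byWitness[where f' = "upd_b i"])
    show "\<forall>a\<in>X. upd_b i (upd_b i a) = a" using X by (auto intro: upd_b_inv)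
  qed (use c1 X upd_b_inv in auto)
  fix c assume "c \<in> X"
  show "dot (upd_b i c) g mod 4 = (dot c g + 2) mod 4" using dot_upd_b[OF i] d by simp
qed

lemma G_fst: "c \<in> G \<Longrightarrow> i < k1 \<Longrightarrow> 0 \<le> fst c i \<and> fst c i < 4"
  and G_fst0: "c \<in> G \<Longrightarrow> k1 \<le> i \<Longrightarrow> fst c i = 0"
  and G_snd: "c \<in> G \<Longrightarrow> i < k2 \<Longrightarrow> 0 \<le> snd c i \<and> snd c i < 2"
  and G_snd0: "c \<in> G \<Longrightarrow> k2 \<le> i \<Longrightarrow> snd c i = 0"
  by (auto simp: G_def type_group_def)

lemma notH_cases:
  assumes g: "g \<in> G" and nh: "g \<notin> H"
  shows "(\<exists>i<k2. snd g i = 1) \<or> (\<exists>i. t \<le> i \<and> i < k1 \<and> fst g i \<noteq> 0) \<or> (\<exists>i<t. odd (fst g i))"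
proof (rule ccontr)
  assume "\<not> ?thesis"
  then have a: "\<And>i. i < k2 \<Longrightarrow> snd g i \<noteq> 1" and b: "\<And>i. t \<le> i \<Longrightarrow> i < k1 \<Longrightarrow> fst g i = 0"
    and c: "\<And>i. i < t \<Longrightarrow> even (fst g i)" by auto
  have "fst g \<in> Pset k1 (\<lambda>i. if i < t then {0,2} else {0})"
  proof -
    have "fst g i \<in> (if i < t then {0,2} else {0})" if "i < k1" for i
    proof (cases "i < t")
      case True
      have "0 \<le> fst g i" "fst g i < 4" using G_fst[OF g that] by auto
      with c[OF True] have "fst g i = 0 \<or> fst g i = 2" by presburger
      then show ?thesis using True by auto
    qed (use b that in auto)
    then show ?thesis using G_fst0[OF g] by (auto simp: Pset_def)
  qed
  moreover have "snd g \<in> Pset k2 (\<lambda>_. {0})"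
  proof -
    have "snd g i = 0" if "i < k2" for i
      using G_snd[OF g that] a[OF that] by auto
    then show ?thesis using G_snd0[OF g] by (auto simp: Pset_def)
  qed
  ultimately have "g \<in> H" unfolding H_def by (cases g) auto
  with nh show False by simp
qed

lemma T_sub: "T \<subseteq> G" by (auto simp: T_def)

lemma sumT_notH:
  assumes g: "g \<in> G" and nh: "g \<notin> H"
  shows "(\<Sum>c\<in>T. lee (dot c g)) = card T"
  using notH_cases[OF g nh]
proof (elim disjE exE conjE)
  fix i assume i: "i < k2" "snd g i = 1"
  show ?thesis
    by (rule sum_upd_b[OF T_sub i]) (auto simp: T_def upd_b_def intro!: upd_b_G[OF _ i(1), unfolded upd_b_def])
next
  fix i assume i: "t \<le> i" "i < k1" "fst g i \<noteq> 0"
  define d :: int where "d = (if odd (fst g i) then 2 else 1)"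
  have r: "0 \<le> fst g i" "fst g i < 4" using G_fst[OF g i(2)] by auto
  have "(d * fst g i) mod 4 = 2" using r i(3) unfolding d_def by presburger
  moreover have "upd_a i e c \<in> T" if "c \<in> T" for c e
  proof -
    have "fst (upd_a i e c) j = fst c j" if "j < t" for j using that i(1) by (auto simp: upd_a_def)
    then show ?thesis using that upd_a_G[OF _ i(2)] by (auto simp: T_def)
  qed
  ultimately show ?thesis by (intro sum_upd_a[OF T_sub i(2)]) auto
next
  fix i assume i: "i < t" "odd (fst g i)"
  have ik: "i < k1" using i tk by simp
  have r: "0 \<le> fst g i" "fst g i < 4" using G_fst[OF g ik] by auto
  have "(2 * fst g i) mod 4 = 2" using r i(2) by presburger
  moreover have "upd_a i 2 c \<in> T" if "c \<in> T" for c
    using that upd_a_G[OF _ ik] upd_a_parity[of 2 i c] by (auto simp: T_def)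
  ultimately show ?thesis by (intro sum_upd_a[OF T_sub ik]) auto
qed

lemma sumT_H:
  assumes g: "g \<in> H" and nz: "g \<noteq> zero"
  shows "(\<Sum>c\<in>T. lee (dot c g)) = card G"
proof -
  have gG: "g \<in> G" using g H_sub by auto
  have "snd g j = 0" for j using g by (cases "j < k2") (auto simp: H_def Pset_def)
  then have s0: "snd g = (\<lambda>_. 0)" by auto
  have f0: "fst g j = 0" if "t \<le> j" for j
    using g tk that by (cases "j < k1") (auto simp: H_def Pset_def)
  have fe: "fst g j = 0 \<or> fst g j = 2" if "j < t" for j
  proof -
    have "j < k1" using that tk by simp
    then show ?thesis using g that by (auto simp: H_def Pset_def)
  qed
  obtain i where i: "fst g i \<noteq> 0"
    using nz s0 by (cases g) (auto simp: zero_def)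
  have it: "i < t" using f0 i by (meson not_le)
  then have ik: "i < k1" using tk by simp
  have g2: "fst g i = 2" using fe[OF it] i by auto
  have sG: "(\<Sum>c\<in>G. lee (dot c g)) = card G"
    by (rule sum_upd_a[OF _ ik, where d=1]) (auto simp: g2 intro: upd_a_G[OF _ ik])
  have sE: "(\<Sum>c\<in>E. lee (dot c g)) = 0"
  proof (rule sum.neutral, rule ballI)
    fix c assume c: "c \<in> E"
    have "4 dvd (\<Sum>j<k1. fst c j * fst g j)"
    proof (rule dvd_sum)
      fix j assume "j \<in> {..<k1}"
      show "4 dvd fst c j * fst g j"
      proof (cases "j < t")
        case True
        then have "even (fst c j)" using c by (auto simp: E_def)
        moreover have "fst g j = 0 \<or> fst g j = 2" using fe[OF True] .
        ultimately show ?thesis by auto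
      qed (use f0 in auto)
    qed
    then have "dot c g = 0 mod 4" by (intro dot_modI) (simp add: s0)
    then show "lee (dot c g) = 0" by (simp add: lee_def)
  qed
  have fin: "finite T" "finite E" using G_fin G_T_E(1) by (auto intro: finite_subset)
  have "(\<Sum>c\<in>G. lee (dot c g)) = (\<Sum>c\<in>T. lee (dot c g)) + (\<Sum>c\<in>E. lee (dot c g))"
    unfolding G_T_E(1) using fin G_T_E(2) by (rule sum.union_disjoint)
  then show ?thesis using sG sE by simp
qed

end


context Z4C begin

lemma negc_G: "c \<in> G \<Longrightarrow> negc c \<in> G"
  by (auto simp: G_def type_group_def negc_def)

lemma negc_negc: "c \<in> G \<Longrightarrow> negc (negc c) = c"
proof -
  assume c: "c \<in> G"
  have "(- ((- fst c i) mod 4)) mod 4 = fst c i" for i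
  proof (cases "i < k1")
    case True then show ?thesis using G_fst[OF c True] by presburger
  qed (use G_fst0[OF c] in auto)
  then show ?thesis by (auto simp: negc_def)
qed

lemma odd_negmod: "odd ((- x) mod 4) \<longleftrightarrow> odd (x::int)"
  by presburger

lemma lead_negc: "lead (negc c) = lead c"
  by (simp add: lead_def negc_def odd_negmod)

lemma lee_dot_negc: "lee (dot (negc c) g) = lee (dot c g)"
proof -
  let ?A = "\<Sum>j<k1. fst c j * fst g j" and ?B = "\<Sum>j<k2. snd c j * snd g j"
  have "4 dvd ((- fst c j) mod 4 + fst c j) * fst g j" for j
  proof -
    have "4 dvd ((- fst c j) mod 4 - (- fst c j))"
      by (metis mod_eq_dvd_iff mod_mod_trivial)
    then show ?thesis by simp
  qed
  then have "4 dvd (\<Sum>j<k1. ((- fst c j) mod 4 + fst c j) * fst g j)" by (intro dvd_sum) auto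
  moreover have "(\<Sum>j<k1. ((- fst c j) mod 4 + fst c j) * fst g j)
      = (\<Sum>j<k1. fst (negc c) j * fst g j) + ?A"
    by (simp only: negc_def fst_conv distrib_right sum.distrib)
  ultimately have "4 dvd (\<Sum>j<k1. fst (negc c) j * fst g j) + 2 * (\<Sum>j<k2. snd (negc c) j * snd g j)
      - (- ?A + 2 * ?B)" by (simp add: negc_def algebra_simps)
  then have "dot (negc c) g = (- ?A + 2 * ?B) mod 4" by (rule dot_modI)
  then have "lee (dot (negc c) g) = lee (- ?A + 2 * ?B)" by (simp add: lee_def)
  also have "\<dots> = lee (- (- ?A + 2 * ?B))" by (simp only: lee_neg)
  also have "\<dots> = lee (?A + 2 * ?B)"
  proof (rule lee_cong)
    have "- (- ?A + 2 * ?B) = (?A + 2 * ?B) + 4 * (- ?B)" by simp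
    moreover have "((?A + 2 * ?B) + 4 * (- ?B)) mod 4 = (?A + 2 * ?B) mod 4" by (rule mod_mult_self2)
    ultimately show "(- (- ?A + 2 * ?B)) mod 4 = (?A + 2 * ?B) mod 4" by simp
  qed
  also have "\<dots> = lee (dot c g)" unfolding dot_def by (rule lee_cong) simp
  finally show ?thesis .
qed

lemma lead_T: assumes "c \<in> T"
  shows "lead c < t" "odd (fst c (lead c))" "\<And>j. j < lead c \<Longrightarrow> even (fst c j)"
proof -
  obtain j where j: "j < t" "odd (fst c j)" using assms by (auto simp: T_def)
  show "odd (fst c (lead c))" unfolding lead_def using j(2) by (rule LeastI)
  show "lead c < t" using Least_le[of "\<lambda>j. odd (fst c j)", OF j(2)] j(1) unfolding lead_def by simp
  show "\<And>i. i < lead c \<Longrightarrow> even (fst c i)" unfolding lead_def using not_less_Least by blast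
qed

lemma S_sub: "S \<subseteq> T" by (auto simp: S_def)

lemma negc_T: "c \<in> T \<Longrightarrow> negc c \<in> T"
  using negc_G by (auto simp: T_def negc_def odd_negmod)

lemma T_split: "T = S \<union> negc ` S" "S \<inter> negc ` S = {}"
proof -
  show "S \<inter> negc ` S = {}"
  proof (rule ccontr)
    assume "S \<inter> negc ` S \<noteq> {}"
    then obtain c where c: "c \<in> S" "negc c \<in> S" by auto
    then have "fst c (lead c) = 1" "fst (negc c) (lead (negc c)) = 1" by (auto simp: S_def)
    then have "(- 1) mod 4 = (1::int)" unfolding lead_negc by (simp add: negc_def)
    then show False by simp
  qed
  show "T = S \<union> negc ` S"
  proof
    show "S \<union> negc ` S \<subseteq> T" using S_sub negc_T by auto
    show "T \<subseteq> S \<union> negc ` S"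
    proof
      fix c assume cT: "c \<in> T"
      show "c \<in> S \<union> negc ` S"
      proof (cases "c \<in> S")
        case False
        have lt: "lead c < k1" using lead_T(1)[OF cT] tk by simp
        have r: "0 \<le> fst c (lead c)" "fst c (lead c) < 4" using G_fst[OF _ lt] cT by (auto simp: T_def)
        have "fst c (lead c) \<noteq> 1" using False cT by (auto simp: S_def)
        with r lead_T(2)[OF cT] have "fst c (lead c) = 3" by presburger
        then have "negc c \<in> S" using negc_T[OF cT] by (auto simp: S_def lead_negc) (simp add: negc_def)
        moreover have "c = negc (negc c)" using negc_negc cT by (auto simp: T_def)
        ultimately show ?thesis by blast
      qed auto
    qed
  qed
qed

lemma T_fin: "finite T" using T_sub G_fin finite_subset by blast
lemma S_fin: "finite S" using S_sub T_fin finite_subset by blast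

lemma sum_T_S:
  assumes "\<And>c. c \<in> S \<Longrightarrow> F (negc c) = (F c :: nat)"
  shows "sum F T = 2 * sum F S"
proof -
  have inj: "inj_on negc S"
    by (rule inj_on_inverseI[where g = negc]) (use negc_negc S_sub T_sub in auto)
  have "sum F T = sum F S + sum F (negc ` S)"
    unfolding T_split(1) using S_fin T_split(2) by (intro sum.union_disjoint) auto
  also have "sum F (negc ` S) = sum (F \<circ> negc) S" using inj by (rule sum.reindex)
  also have "\<dots> = sum F S" using assms by (intro sum.cong) auto
  finally show ?thesis by simp
qed

lemma card_T_S: "card T = 2 * card S"
  using sum_T_S[of "\<lambda>_. 1"] by simp

definition W :: "elt \<Rightarrow> nat" where "W g = (\<Sum>c\<in>S. lee (dot c g))"

lemma sumT_W: "(\<Sum>c\<in>T. lee (dot c g)) = 2 * W g"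
  unfolding W_def by (rule sum_T_S) (simp add: lee_dot_negc)

lemma W_notH: "g \<in> G \<Longrightarrow> g \<notin> H \<Longrightarrow> W g = card S"
  using sumT_notH[of g] sumT_W[of g] card_T_S by simp

lemma W_H: "g \<in> H \<Longrightarrow> g \<noteq> zero \<Longrightarrow> 2 * W g = card G"
  using sumT_H[of g] sumT_W[of g] by simp

lemma W_zero: "W zero = 0"
  by (simp add: W_def dot_def zero_def lee_def)

end



lemma small_dvd: "m dvd (x - (y::int)) \<Longrightarrow> 0 \<le> x \<Longrightarrow> x < m \<Longrightarrow> 0 \<le> y \<Longrightarrow> y < m \<Longrightarrow> x = y"
proof -
  assume "m dvd (x - y)" "0 \<le> x" "x < m" "0 \<le> y" "y < m"
  then obtain k where k: "x - y = m * k" "0 \<le> x" "x < m" "0 \<le> y" "y < m" by (auto simp: dvd_def)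
  show ?thesis
  proof (rule ccontr)
    assume "x \<noteq> y"
    then have "k \<noteq> 0" using k by auto
    then have "k \<ge> 1 \<or> k \<le> -1" by linarith
    then show False
    proof
      assume "k \<ge> 1" then have "m * k \<ge> m" using k by (simp add: mult_le_cancel_left1)
      then show False using k by linarith
    next
      assume "k \<le> -1" then have "m * k \<le> - m" using k
        by (metis mult.commute mult_minus1 mult_right_mono order_le_less_trans order_less_imp_le linorder_not_le)
      then show False using k by linarith
    qed
  qed
qed

lemma mod3_eq:
  fixes x y m :: int
  assumes r: "0 \<le> x" "x < m" "0 \<le> y" "y < m" and m: "m = 2 \<or> m = 4"
    and h: "(x + (3 * y) mod m) mod m = 0"
  shows "x = y"
proof -
  have "m dvd (x + 3 * y)" using h by (simp add: mod_add_right_eq dvd_eq_mod_eq_0)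
  moreover have "m dvd 4 * y" using m by auto
  ultimately have "m dvd (x + 3 * y) - 4 * y" by (rule dvd_diff)
  moreover have "(x + 3 * y) - 4 * y = x - y" by simp
  ultimately have "m dvd (x - y)" by simp
  then show ?thesis using r small_dvd by blast
qed

lemma mod_lin4: "(a * (X mod 4) + b * (Y mod 4)) mod 4 = (a * X + b * (Y::int)) mod 4"
proof -
  have "(a * (X mod 4) + b * (Y mod 4)) mod 4 = ((a * (X mod 4)) mod 4 + (b * (Y mod 4)) mod 4) mod 4" by (rule mod_add_eq[symmetric])
  also have "\<dots> = ((a*X) mod 4 + (b*Y) mod 4) mod 4" by (simp only: mod_mult_right_eq)
  also have "\<dots> = (a*X + b*Y) mod 4" by (rule mod_add_eq)
  finally show ?thesis .
qed

context Z4C begin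

definition scal :: "int \<Rightarrow> elt \<Rightarrow> elt" where
  "scal r g = ((\<lambda>i. (r * fst g i) mod 4), (\<lambda>i. (r * snd g i) mod 2))"

definition eu :: "nat \<Rightarrow> elt" where "eu j = ((\<lambda>i. if i = j then 1 else 0), (\<lambda>_. 0))"
definition ev :: "nat \<Rightarrow> elt" where "ev j = ((\<lambda>_. 0), (\<lambda>i. if i = j then 1 else 0))"

lemma eu_G: "j < k1 \<Longrightarrow> eu j \<in> G" by (auto simp: eu_def G_def type_group_def)
lemma ev_G: "j < k2 \<Longrightarrow> ev j \<in> G" by (auto simp: ev_def G_def type_group_def)

lemma dot_eu: "j < k1 \<Longrightarrow> dot c (eu j) = fst c j mod 4"
proof -
  assume j: "j < k1"
  have "(\<Sum>i<k1. fst c i * fst (eu j) i) = (\<Sum>i<k1. (if i = j then fst c j else 0))"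
    by (rule sum.cong) (auto simp: eu_def)
  also have "\<dots> = fst c j" using j by simp
  finally show ?thesis by (simp add: dot_def eu_def)
qed

lemma dot_ev: "j < k2 \<Longrightarrow> dot c (ev j) = (2 * snd c j) mod 4"
proof -
  assume j: "j < k2"
  have "(\<Sum>i<k2. snd c i * snd (ev j) i) = (\<Sum>i<k2. (if i = j then snd c j else 0))"
    by (rule sum.cong) (auto simp: ev_def)
  also have "\<dots> = snd c j" using j by simp
  finally show ?thesis by (simp add: dot_def ev_def)
qed

lemma dot_lin:
  assumes f: "\<And>i. 4 dvd (fst g' i - (\<alpha> * fst g i + \<beta> * fst h i))"
    and s: "\<And>i. 2 dvd (snd g' i - (\<alpha> * snd g i + \<beta> * snd h i))"
  shows "dot c g' = (\<alpha> * dot c g + \<beta> * dot c h) mod 4"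
proof -
  let ?A = "\<lambda>g. \<Sum>i<k1. fst c i * fst g i" and ?B = "\<lambda>g. \<Sum>i<k2. snd c i * snd g i"
  have d1: "4 dvd (\<Sum>i<k1. fst c i * (fst g' i - (\<alpha> * fst g i + \<beta> * fst h i)))"
    using f by (intro dvd_sum) auto
  have d2: "4 dvd 2 * (\<Sum>i<k2. snd c i * (snd g' i - (\<alpha> * snd g i + \<beta> * snd h i)))"
  proof -
    have "2 dvd (\<Sum>i<k2. snd c i * (snd g' i - (\<alpha> * snd g i + \<beta> * snd h i)))"
      using s by (intro dvd_sum) auto
    then show ?thesis by auto
  qed
  have e1: "(\<Sum>i<k1. fst c i * (fst g' i - (\<alpha> * fst g i + \<beta> * fst h i))) = ?A g' - \<alpha> * ?A g - \<beta> * ?A h"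
    by (simp add: algebra_simps sum_subtractf sum.distrib sum_distrib_left)
  have e2: "(\<Sum>i<k2. snd c i * (snd g' i - (\<alpha> * snd g i + \<beta> * snd h i))) = ?B g' - \<alpha> * ?B g - \<beta> * ?B h"
    by (simp add: algebra_simps sum_subtractf sum.distrib sum_distrib_left)
  have eq: "(?A g' + 2 * ?B g') - (\<alpha> * (?A g + 2 * ?B g) + \<beta> * (?A h + 2 * ?B h))
      = (?A g' - \<alpha> * ?A g - \<beta> * ?A h) + 2 * (?B g' - \<alpha> * ?B g - \<beta> * ?B h)"
    by (simp add: algebra_simps)
  have "4 dvd (?A g' - \<alpha> * ?A g - \<beta> * ?A h) + 2 * (?B g' - \<alpha> * ?B g - \<beta> * ?B h)"
    by (rule dvd_add) (use d1 d2 e1 e2 in \<open>simp_all only:\<close>)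
  then have "4 dvd (?A g' + 2 * ?B g') - (\<alpha> * (?A g + 2 * ?B g) + \<beta> * (?A h + 2 * ?B h))"
    by (simp only: eq)
  then have "dot c g' = (\<alpha> * (?A g + 2 * ?B g) + \<beta> * (?A h + 2 * ?B h)) mod 4"
    by (rule dot_modI)
  also have "\<dots> = (\<alpha> * dot c g + \<beta> * dot c h) mod 4"
    unfolding dot_def by (rule mod_lin4[symmetric])
  finally show ?thesis .
qed

lemma type_add_G: "g \<in> G \<Longrightarrow> h \<in> G \<Longrightarrow> type_add g h \<in> G"
  by (auto simp: G_def type_group_def type_add_def)

lemma scal_G: "g \<in> G \<Longrightarrow> scal r g \<in> G"
  by (auto simp: G_def type_group_def scal_def)

lemma dot_add: "dot c (type_add g h) = (dot c g + dot c h) mod 4"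
proof -
  have "dot c (type_add g h) = (1 * dot c g + 1 * dot c h) mod 4"
  proof (rule dot_lin)
    fix i
    show "4 dvd (fst (type_add g h) i - (1 * fst g i + 1 * fst h i))"
      by (simp add: type_add_def mod_eq_dvd_iff[symmetric])
    show "2 dvd (snd (type_add g h) i - (1 * snd g i + 1 * snd h i))"
      by (simp add: type_add_def mod_eq_dvd_iff[symmetric])
  qed
  then show ?thesis by simp
qed

lemma dot_scal: "dot c (scal r g) = (r * dot c g) mod 4"
proof -
  have "dot c (scal r g) = (r * dot c g + 0 * dot c g) mod 4"
  proof (rule dot_lin)
    fix i
    show "4 dvd (fst (scal r g) i - (r * fst g i + 0 * fst g i))"
      by (simp add: scal_def mod_eq_dvd_iff[symmetric])
    show "2 dvd (snd (scal r g) i - (r * snd g i + 0 * snd g i))"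
      by (simp add: scal_def mod_eq_dvd_iff[symmetric])
  qed
  then show ?thesis by simp
qed

lemma dot_zero: "dot c zero = 0" by (simp add: dot_def zero_def)

lemma S_nonempty: "0 < card S"
proof -
  have "card E < card G" using E_card G_card t1 tk
    by (simp add: power_strict_increasing_iff)
  then have "0 < card T" using T_card by simp
  then show ?thesis using card_T_S by simp
qed

lemma W_pos: "g \<in> G \<Longrightarrow> g \<noteq> zero \<Longrightarrow> 0 < W g"
proof -
  assume g: "g \<in> G" "g \<noteq> zero"
  show ?thesis
  proof (cases "g \<in> H")
    case True
    then have "2 * W g = card G" using W_H g by simp
    then show ?thesis using G_card by (cases "W g") auto
  next
    case False
    then show ?thesis using W_notH g S_nonempty by simp
  qed
qed

end

locale Z4C2 = Z4C +
  fixes col :: "nat \<Rightarrow> elt"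
  assumes col_bij: "bij_betw col {..<card S} S"
begin

abbreviation N where "N \<equiv> card S"

definition enc :: "elt \<Rightarrow> (nat \<Rightarrow> int)" where
  "enc g = (\<lambda>p. if p < N then dot (col p) g else 0)"

lemma col_S: "p < N \<Longrightarrow> col p \<in> S"
  using col_bij by (auto simp: bij_betw_def)

lemma lw_enc: "lee_weight N (enc g) = W g"
proof -
  have "lee_weight N (enc g) = (\<Sum>p<N. lee (dot (col p) g))"
    unfolding lee_weight_def enc_def by (rule sum.cong) auto
  also have "\<dots> = W g" unfolding W_def
    by (rule sum.reindex_bij_betw[OF col_bij])
  finally show ?thesis .
qed

lemma enc_words: "enc g \<in> z4_words N"
  by (auto simp: z4_words_def enc_def dot_range)

lemma enc_zero: "enc zero = (\<lambda>_. 0)"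
  by (auto simp: enc_def dot_zero)

lemma enc_add: "enc (type_add g h) = vadd4 (enc g) (enc h)"
  by (auto simp: enc_def vadd4_def dot_add)

lemma enc_scal: "enc (scal r g) = smult4 r (enc g)"
  by (auto simp: enc_def smult4_def dot_scal)

lemma diff_zero:
  assumes g: "g \<in> G" and h: "h \<in> G" and z: "type_add g (scal 3 h) = zero"
  shows "g = h"
proof -
  have "fst g i = fst h i" for i
  proof (cases "i < k1")
    case True
    have "(fst g i + (3 * fst h i) mod 4) mod 4 = 0"
      using fun_cong[OF arg_cong[OF z, of fst], of i] by (simp add: type_add_def scal_def zero_def)
    then show ?thesis using G_fst[OF g True] G_fst[OF h True] mod3_eq[of _ 4] by auto
  qed (use G_fst0 g h in auto)
  moreover have "snd g i = snd h i" for i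
  proof (cases "i < k2")
    case True
    have "(snd g i + (3 * snd h i) mod 2) mod 2 = 0"
      using fun_cong[OF arg_cong[OF z, of snd], of i] by (simp add: type_add_def scal_def zero_def)
    then show ?thesis using G_snd[OF g True] G_snd[OF h True] mod3_eq[of _ 2] by auto
  qed (use G_snd0 g h in auto)
  ultimately show ?thesis by (simp add: prod_eq_iff ext)
qed

lemma enc_inj: "inj_on enc G"
proof (rule inj_onI)
  fix g h assume g: "g \<in> G" and h: "h \<in> G" and eq: "enc g = enc h"
  let ?d = "type_add g (scal 3 h)"
  have dG: "?d \<in> G" using g h by (simp add: type_add_G scal_G)
  have "enc ?d = vadd4 (enc g) (smult4 3 (enc h))" by (simp add: enc_add enc_scal)
  also have "\<dots> = (\<lambda>_. 0)" unfolding eq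
  proof
    fix p
    have "(enc h p + (3 * enc h p) mod 4) mod 4 = 0" by (simp add: mod_add_right_eq)
    then show "vadd4 (enc h) (smult4 3 (enc h)) p = 0" by (simp add: vadd4_def smult4_def)
  qed
  finally have "W ?d = 0" using lw_enc[of ?d] by (simp add: lee_weight_def lee_def)
  then have "?d = zero" using W_pos[OF dG] by auto
  then show "g = h" using diff_zero g h by simp
qed

end



lemma mult_unit4:
  fixes X Y a b :: int
  assumes a: "a = 1 \<or> a = 3" and d: "4 dvd X * a + Y * b"
  shows "4 dvd X + a * b * Y"
  using a
proof
  assume "a = 1" then show ?thesis using d by (simp add: algebra_simps)
next
  assume a3: "a = 3"
  have "4 dvd 3 * (X * a + Y * b)" using d by (rule dvd_mult)
  moreover have "4 dvd 8 * X"
  proof -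
    have "8 * X = 4 * (2 * X)" by simp
    then show ?thesis by (metis dvd_triv_left)
  qed
  ultimately have "4 dvd 3 * (X * a + Y * b) - 8 * X" by (rule dvd_diff)
  moreover have "3 * (X * a + Y * b) - 8 * X = X + a * b * Y" using a3 by (simp add: algebra_simps)
  ultimately show ?thesis by simp
qed

context Z4C begin

lemma no_pm:
  assumes c: "c \<in> S" and c': "c' \<in> S" and e: "odd e"
    and h: "\<And>g. g \<in> G \<Longrightarrow> 4 dvd (dot c g + e * dot c' g)"
  shows "c = c'"
proof -
  have cG: "c \<in> G" and c'G: "c' \<in> G" using c c' S_sub T_sub by auto
  have cT: "c \<in> T" and c'T: "c' \<in> T" using c c' S_sub by auto
  have hu: "4 dvd (fst c j + e * fst c' j)" if j: "j < k1" for j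
  proof -
    have "dot c (eu j) = fst c j" "dot c' (eu j) = fst c' j"
      using dot_eu[OF j] G_fst[OF cG j] G_fst[OF c'G j] by auto
    then show ?thesis using h[OF eu_G[OF j]] by simp
  qed
  have hv: "4 dvd (2 * snd c j + e * (2 * snd c' j))" if j: "j < k2" for j
  proof -
    have "dot c (ev j) = 2 * snd c j" "dot c' (ev j) = 2 * snd c' j"
      using dot_ev[OF j] G_snd[OF cG j] G_snd[OF c'G j] by auto
    then show ?thesis using h[OF ev_G[OF j]] by simp
  qed
  have oddI: "odd x" if "4 dvd (y + e * x)" "odd y" for x y :: int
  proof -
    have "2 dvd (y + e * x)" using that(1) dvd_trans[of "2::int" 4 "y + e * x"] by simp
    then have "even (y + e * x)" by simp
    then show ?thesis using that(2) e by auto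
  qed
  have oddI2: "odd x" if "4 dvd (x + e * y)" "odd y" for x y :: int
  proof -
    have "2 dvd (x + e * y)" using that(1) dvd_trans[of "2::int" 4 "x + e * y"] by simp
    then have "even (x + e * y)" by simp
    then show ?thesis using that(2) e by auto
  qed
  define j where "j = lead c"
  define j' where "j' = lead c'"
  have jt: "j < t" "j' < t" unfolding j_def j'_def using lead_T(1)[OF cT] lead_T(1)[OF c'T] by simp_all
  then have jk: "j < k1" "j' < k1" using tk by simp_all
  have a1: "fst c j = 1" "fst c' j' = 1" using c c' unfolding S_def j_def j'_def by simp_all
  have "4 dvd (1 + e * fst c' j)" using hu[OF jk(1)] a1(1) by simp
  then have o1: "odd (fst c' j)" by (rule oddI) simp
  have "(LEAST i. odd (fst c' i)) \<le> j" using o1 by (rule Least_le)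
  then have le1: "j' \<le> j" unfolding j'_def lead_def .
  have "4 dvd (fst c j' + e * 1)" using hu[OF jk(2)] a1(2) by simp
  then have o2: "odd (fst c j')" by (rule oddI2) simp
  have "(LEAST i. odd (fst c i)) \<le> j'" using o2 by (rule Least_le)
  then have le2: "j \<le> j'" unfolding j_def lead_def .
  have jj: "j = j'" using le1 le2 by simp
  have e1: "4 dvd (1 + e)" using hu[OF jk(1)] a1 jj by simp
  have fst_eq: "fst c i = fst c' i" for i
  proof (cases "i < k1")
    case True
    have "4 dvd (1 + e) * fst c' i" using e1 by simp
    with hu[OF True] have "4 dvd (fst c i + e * fst c' i) - (1 + e) * fst c' i" by (rule dvd_diff)
    moreover have "(fst c i + e * fst c' i) - (1 + e) * fst c' i = fst c i - fst c' i" by (simp add: algebra_simps)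
    ultimately have "4 dvd fst c i - fst c' i" by simp
    then show ?thesis using G_fst[OF cG True] G_fst[OF c'G True] small_dvd by blast
  qed (use G_fst0 cG c'G in auto)
  have snd_eq: "snd c i = snd c' i" for i
  proof (cases "i < k2")
    case True
    have "4 dvd 2 * (snd c i + e * snd c' i)" using hv[OF True] by (simp add: algebra_simps)
    then obtain k where "2 * (snd c i + e * snd c' i) = 4 * k" unfolding dvd_def by blast
    then have "snd c i + e * snd c' i = 2 * k" by simp
    then have d: "2 dvd (snd c i + e * snd c' i)" by simp
    have "2 dvd (1 + e) * snd c' i" using e by simp
    with d have "2 dvd (snd c i + e * snd c' i) - (1 + e) * snd c' i" by (rule dvd_diff)
    moreover have "(snd c i + e * snd c' i) - (1 + e) * snd c' i = snd c i - snd c' i" by (simp add: algebra_simps)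
    ultimately have "2 dvd snd c i - snd c' i" by simp
    then show ?thesis using G_snd[OF cG True] G_snd[OF c'G True] small_dvd by blast
  qed (use G_snd0 cG c'G in auto)
  show ?thesis using fst_eq snd_eq by (simp add: prod_eq_iff ext)
qed

end



context Z4C2 begin

lemma proj: "projective N (enc ` G)"
  unfolding projective_def
proof (rule ballI, rule ccontr)
  fix y assume y: "y \<in> dual_code N (enc ` G) - {\<lambda>_. 0}" and lw: "\<not> 3 \<le> lee_weight N y"
  have yw: "y \<in> z4_words N" and dual: "\<And>g. g \<in> G \<Longrightarrow> (\<Sum>i<N. enc g i * y i) mod 4 = 0"
    using y by (auto simp: dual_code_def)
  have yr: "\<And>i. i < N \<Longrightarrow> 0 \<le> y i \<and> y i < 4" and y0: "\<And>i. N \<le> i \<Longrightarrow> y i = 0"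
    using yw by (auto simp: z4_words_def)
  obtain p where yp: "y p \<noteq> 0" using y by auto
  have pN: "p < N" using yp y0 by (meson not_le)
  have lz: "\<And>i. i < N \<Longrightarrow> lee (y i) = 0 \<longleftrightarrow> y i = 0" using yr lee_zero_iff by blast
  have dualX: "4 dvd (\<Sum>i<N. dot (col i) g * y i)" if g: "g \<in> G" for g
  proof -
    have "(\<Sum>i<N. enc g i * y i) = (\<Sum>i<N. dot (col i) g * y i)"
      by (rule sum.cong) (auto simp: enc_def)
    then show ?thesis using dual[OF g] by (simp add: dvd_eq_mod_eq_0)
  qed
  let ?A = "{..<N} - {p}"
  have lwsplit: "lee_weight N y = lee (y p) + (\<Sum>i\<in>?A. lee (y i))"
    unfolding lee_weight_def using pN by (subst sum.remove[of _ p]) auto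
  have lp: "lee (y p) \<ge> 1" using lz[OF pN] yp by (cases "lee (y p)") auto
  show False
  proof (cases "(\<Sum>i\<in>?A. lee (y i)) = 0")
    case True
    then have z: "\<And>i. i \<in> ?A \<Longrightarrow> y i = 0" using lz by auto
    have sp: "(\<Sum>i<N. dot (col i) g * y i) = dot (col p) g * y p" for g
    proof -
      have "(\<Sum>i<N. dot (col i) g * y i) = dot (col p) g * y p + (\<Sum>i\<in>?A. dot (col i) g * y i)"
        using pN by (subst sum.remove[of _ p]) auto
      also have "(\<Sum>i\<in>?A. dot (col i) g * y i) = 0" using z by (intro sum.neutral) auto
      finally show ?thesis by simp
    qed
    have cS: "col p \<in> S" using col_S[OF pN] .
    then have cT: "col p \<in> T" using S_sub by auto
    have lk: "lead (col p) < k1" using lead_T(1)[OF cT] tk by simp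
    have "dot (col p) (eu (lead (col p))) = 1"
      using dot_eu[OF lk] cS by (simp add: S_def)
    then have "4 dvd y p" using dualX[OF eu_G[OF lk]] sp by simp
    then have "y p = 0" using yr[OF pN] small_dvd[of 4 "y p" 0] by simp
    then show False using yp by simp
  next
    case False
    then obtain q where q: "q \<in> ?A" "lee (y q) \<noteq> 0" by (meson sum.neutral)
    have qN: "q < N" and qp: "q \<noteq> p" using q by auto
    let ?B = "?A - {q}"
    have s2: "(\<Sum>i\<in>?A. lee (y i)) = lee (y q) + (\<Sum>i\<in>?B. lee (y i))"
      using q by (subst sum.remove[of _ q]) auto
    have l1: "lee (y p) = 1" "lee (y q) = 1" "(\<Sum>i\<in>?B. lee (y i)) = 0"
      using lw lwsplit s2 lp q(2) by linarith+
    have z: "\<And>i. i \<in> ?B \<Longrightarrow> y i = 0" using l1(3) lz by auto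
    have ypv: "y p = 1 \<or> y p = 3" using l1(1) yr[OF pN] lee_one_iff by blast
    have yqv: "y q = 1 \<or> y q = 3" using l1(2) yr[OF qN] lee_one_iff by blast
    have sp: "(\<Sum>i<N. dot (col i) g * y i) = dot (col p) g * y p + dot (col q) g * y q" for g
    proof -
      have "(\<Sum>i<N. dot (col i) g * y i) = dot (col p) g * y p + (\<Sum>i\<in>?A. dot (col i) g * y i)"
        using pN by (subst sum.remove[of _ p]) auto
      also have "(\<Sum>i\<in>?A. dot (col i) g * y i) = dot (col q) g * y q + (\<Sum>i\<in>?B. dot (col i) g * y i)"
        using q by (subst sum.remove[of _ q]) auto
      also have "(\<Sum>i\<in>?B. dot (col i) g * y i) = 0" using z by (intro sum.neutral) auto
      finally show ?thesis by simp
    qed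
    have key: "4 dvd (dot (col p) g + (y p * y q) * dot (col q) g)" if g: "g \<in> G" for g
      using mult_unit4[OF ypv, of "dot (col p) g" "dot (col q) g" "y q"] dualX[OF g] sp by simp
    have "odd (y p * y q)" using ypv yqv by auto
    then have "col p = col q" using no_pm[OF col_S[OF pN] col_S[OF qN]] key by blast
    then have "p = q" using col_bij pN qN by (auto simp: bij_betw_def inj_on_def)
    then show False using qp by simp
  qed
qed

end



context Z4C2 begin

lemma m_ge: "t + 1 \<le> 2*k1+k2" using t1 tk by simp

lemma N_eq: "N = 2^(2*k1+k2-1) - 2^(2*k1+k2-t-1)"
proof -
  obtain r where r: "2*k1+k2 = t + 1 + r" using m_ge le_Suc_ex by blast
  have "2 * N = card G - card E" using card_T_S T_card by simp
  also have "\<dots> = 2^(t+1+r) - 2^(r+1)" using G_card E_card r by simp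
  also have "\<dots> = 2 * (2^(t+r) - 2^r)" by (simp add: diff_mult_distrib2)
  finally have "N = 2^(t+r) - 2^r" by simp
  then show ?thesis using r by simp
qed

lemma W_val: "g \<in> G \<Longrightarrow> W g = (if g = zero then 0 else if g \<in> H then 2^(2*k1+k2-1) else N)"
proof -
  assume g: "g \<in> G"
  obtain r where r: "2*k1+k2 = Suc r" using m_ge by (metis add.commute add_leE plus_1_eq_Suc le_Suc_ex)
  have e: "(2::nat)^(2*k1+k2) = 2 * 2^(2*k1+k2-1)" by (simp add: r)
  show ?thesis
    using W_zero W_notH[OF g] W_H[of g] G_card e by auto
qed

lemma N_pos: "0 < N" and N_lt: "N < 2^(2*k1+k2-1)"
  using N_eq S_nonempty by auto

lemma card_H_lt: "card H < card G"
  using H_card G_card m_ge by (simp add: power_strict_increasing_iff)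

lemma main:
  "z4_linear_code N (enc ` G) \<and> has_type (enc ` G) k1 k2 \<and> projective N (enc ` G) \<and>
   min_lee N (enc ` G) = N \<and>
   lee_weight N ` (enc ` G - {\<lambda>_. 0}) = {N, 2^(2*k1+k2-1)} \<and> N \<noteq> 2^(2*k1+k2-1) \<and>
   weight_count N (enc ` G) N = 2 ^ (2 * k1 + k2) - 2 ^ t \<and>
   weight_count N (enc ` G) (2^(2*k1+k2-1)) = 2 ^ t - 1"
proof -
  let ?w2 = "2^(2*k1+k2-1) :: nat"
  have lin: "z4_linear_code N (enc ` G)"
    unfolding z4_linear_code_def
  proof (intro conjI ballI allI)
    show "enc ` G \<subseteq> z4_words N" using enc_words by auto
    show "(\<lambda>_. 0) \<in> enc ` G" using enc_zero zero_G by (metis image_eqI)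
  next
    fix x y assume "x \<in> enc ` G" "y \<in> enc ` G"
    then obtain g h where "g \<in> G" "h \<in> G" "x = enc g" "y = enc h" by auto
    then show "vadd4 x y \<in> enc ` G" using enc_add type_add_G by (metis image_eqI)
  next
    fix a x assume "x \<in> enc ` G"
    then obtain g where "g \<in> G" "x = enc g" by auto
    then show "smult4 a x \<in> enc ` G" using enc_scal scal_G by (metis image_eqI)
  qed
  have ht: "has_type (enc ` G) k1 k2"
    unfolding has_type_def
  proof (intro exI conjI ballI)
    show "bij_betw (the_inv_into G enc) (enc ` G) (type_group k1 k2)"
      using bij_betw_the_inv_into[OF inj_on_imp_bij_betw[OF enc_inj]] by (simp add: G_def)
  next
    fix x y assume "x \<in> enc ` G" "y \<in> enc ` G"
    then obtain g h where gh: "g \<in> G" "h \<in> G" "x = enc g" "y = enc h" by auto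
    have "vadd4 x y = enc (type_add g h)" using gh enc_add by simp
    then show "the_inv_into G enc (vadd4 x y) = type_add (the_inv_into G enc x) (the_inv_into G enc y)"
      using gh the_inv_into_f_f[OF enc_inj] type_add_G by simp
  qed
  have enc0: "g \<in> G \<Longrightarrow> enc g = (\<lambda>_. 0) \<longleftrightarrow> g = zero" for g
    using enc_inj enc_zero zero_G by (metis inj_on_eq_iff)
  have CG0: "enc ` G - {\<lambda>_. 0} = enc ` (G - {zero})" using enc0 by auto
  have GH: "G - H \<noteq> {}"
  proof
    assume "G - H = {}"
    then have "G \<subseteq> H" by auto
    then have "card G \<le> card H" using H_fin by (rule card_mono[rotated])
    then show False using card_H_lt by simp
  qed
  obtain g1 where g1: "g1 \<in> G" "g1 \<notin> H" using GH by auto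
  have "H - {zero} \<noteq> {}"
  proof
    assume "H - {zero} = {}"
    then have "H \<subseteq> {zero}" by auto
    then have "card H \<le> card {zero}" by (intro card_mono) auto
    then have "card H \<le> 1" by simp
    moreover have "(2::nat) ^ 1 \<le> 2 ^ t" using t1 by (intro power_increasing) auto
    then have "card H \<ge> 2" using H_card by simp
    ultimately show False by simp
  qed
  then obtain g2 where g2: "g2 \<in> H" "g2 \<noteq> zero" by auto
  have g2G: "g2 \<in> G" using g2 H_sub by auto
  have img: "lee_weight N ` (enc ` G - {\<lambda>_. 0}) = {N, ?w2}"
  proof
    show "lee_weight N ` (enc ` G - {\<lambda>_. 0}) \<subseteq> {N, ?w2}"
      unfolding CG0
    proof
      fix x assume "x \<in> lee_weight N ` enc ` (G - {zero})"
      then obtain g where g: "g \<in> G" "g \<noteq> zero" "x = W g" using lw_enc by auto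
      then show "x \<in> {N, ?w2}" using W_val[OF g(1)] by (cases "g \<in> H") auto
    qed
    have g1z: "g1 \<noteq> zero" using g1 zero_H by auto
    have "N = lee_weight N (enc g1)" using g1 g1z W_val[of g1] lw_enc by simp
    moreover have "enc g1 \<in> enc ` (G - {zero})" using g1 g1z by auto
    ultimately have i1: "N \<in> lee_weight N ` (enc ` G - {\<lambda>_. 0})" unfolding CG0 by blast
    have "?w2 = lee_weight N (enc g2)" using g2 g2G W_val[of g2] lw_enc by simp
    moreover have "enc g2 \<in> enc ` (G - {zero})" using g2 g2G by auto
    ultimately have i2: "?w2 \<in> lee_weight N ` (enc ` G - {\<lambda>_. 0})" unfolding CG0 by blast
    with i1 show "{N, ?w2} \<subseteq> lee_weight N ` (enc ` G - {\<lambda>_. 0})" by auto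
  qed
  have ml: "min_lee N (enc ` G) = N" unfolding min_lee_def img using N_lt by simp
  have sub_card: "card {x \<in> enc ` G. lee_weight N x = w} = card {g \<in> G. W g = w}" for w
  proof -
    have "{x \<in> enc ` G. lee_weight N x = w} = enc ` {g \<in> G. W g = w}" using lw_enc by auto
    moreover have "inj_on enc {g \<in> G. W g = w}" using enc_inj by (rule inj_on_subset) auto
    ultimately show ?thesis by (simp add: card_image)
  qed
  have e1: "W g = N \<longleftrightarrow> g \<notin> H" if g: "g \<in> G" for g
    using W_val[OF g] N_pos N_lt zero_H by (cases "g = zero"; cases "g \<in> H") auto
  have e2: "W g = ?w2 \<longleftrightarrow> g \<in> H - {zero}" if g: "g \<in> G" for g
    using W_val[OF g] N_pos N_lt zero_H by (cases "g = zero"; cases "g \<in> H") auto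
  have s1: "{g \<in> G. W g = N} = G - H" using e1 by auto
  have s2: "{g \<in> G. W g = ?w2} = H - {zero}" using e2 H_sub by auto
  have c1: "weight_count N (enc ` G) N = 2 ^ (2 * k1 + k2) - 2 ^ t"
    unfolding weight_count_def sub_card s1 using card_Diff_subset[OF H_fin H_sub] G_card H_card by simp
  have c2: "weight_count N (enc ` G) ?w2 = 2 ^ t - 1"
    unfolding weight_count_def sub_card s2 using zero_H H_card H_fin by simp
  show ?thesis using lin ht proj ml img N_lt c1 c2 by simp
qed

end

context Z4C begin

lemma main_ex:
  "\<exists>C. z4_linear_code (2^(2*k1+k2-1) - 2^(2*k1+k2-t-1)) C \<and> has_type C k1 k2 \<and>
   projective (2^(2*k1+k2-1) - 2^(2*k1+k2-t-1)) C \<and>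
   min_lee (2^(2*k1+k2-1) - 2^(2*k1+k2-t-1)) C = 2^(2*k1+k2-1) - 2^(2*k1+k2-t-1) \<and>
   lee_weight (2^(2*k1+k2-1) - 2^(2*k1+k2-t-1)) ` (C - {\<lambda>_. 0}) =
     {2^(2*k1+k2-1) - 2^(2*k1+k2-t-1), 2^(2*k1+k2-1)} \<and>
   2^(2*k1+k2-1) - 2^(2*k1+k2-t-1) \<noteq> (2^(2*k1+k2-1) :: nat) \<and>
   weight_count (2^(2*k1+k2-1) - 2^(2*k1+k2-t-1)) C (2^(2*k1+k2-1) - 2^(2*k1+k2-t-1)) = 2 ^ (2 * k1 + k2) - 2 ^ t \<and>
   weight_count (2^(2*k1+k2-1) - 2^(2*k1+k2-t-1)) C (2^(2*k1+k2-1)) = 2 ^ t - 1"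
proof -
  obtain col where "bij_betw col {0..<card S} S" using ex_bij_betw_nat_finite[OF S_fin] by blast
  then have "bij_betw col {..<card S} S" by (simp add: atLeast0LessThan)
  then interpret Z4C2 k1 k2 t col by unfold_locales
  show ?thesis
    apply (rule exI[of _ "enc ` G"])
    unfolding N_eq[symmetric] by (rule main)
qed

end


theorem theorem5p7:
  fixes k1 k2 t :: nat
  assumes "2 * k1 + k2 \<ge> 2" and "1 \<le> t" and "t \<le> k1"
  shows "\<exists>C. let n = 2 ^ (2 * k1 + k2 - 1) - 2 ^ (2 * k1 + k2 - t - 1);
                 w1 = 2 ^ (2 * k1 + k2 - 1) - 2 ^ (2 * k1 + k2 - t - 1);
                 w2 = 2 ^ (2 * k1 + k2 - 1)
             in z4_linear_code n C \<and> has_type C k1 k2 \<and> projective n C \<and>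
                min_lee n C = n \<and>
                lee_weight n ` (C - {\<lambda>_. 0}) = {w1, w2} \<and> w1 \<noteq> w2 \<and>
                weight_count n C w1 = 2 ^ (2 * k1 + k2) - 2 ^ t \<and>
                weight_count n C w2 = 2 ^ t - 1"
proof -
  interpret Z4C k1 k2 t using assms by unfold_locales auto
  show ?thesis unfolding Let_def by (rule main_ex)
qed

end
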